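(* Assume $k=2$ and write $l=l_1$, $y=y_1$. (1) If $r=e-1$, then $b=(l+1)e+h\le(l+2)e-2$, and $b=(l+2)e-2$ if and only if $h=e-2$. (2) If $r=e-2$, then $b=(l+1)(e-1)+h-p-1$ and $c=(p+l+2)(e-1)-b$. Further: (a) $l+1\le p\le2l+2$, and $p=2l+2$ implies $h>0$; (b) $(l+1)(e-3)\le b\le(l+1)(e-2)+e-3$; moreover $b=(l+1)(e-3)$ if and only if ($p=2l+2$ and $h=1$) or ($p=2l+1$ and $h=0$); and $b=(l+1)(e-2)+e-3$ implies $p=l+1$, $p>1$, $h=e-2$, $y=e+1$.
   Context: Let $(R,\mathfrak m)$ be a one-dimensional local Noetherian domain with quotient field $K$, not regular, analytically irreducible (the integral closure $\overline R$ of $R$ in $K$ is a DVR and a finite $R$-module) and residually rational. Let $v$ be the valuation of $\overline R$ normalized so a uniformizer $t$ has value 1, $v(R)=\{v(a):a\in R\setminus\{0\}\}$, $\mathfrak C=(R:_K\overline R)=t^c\overline R$ with $c$ the least element of $v(R)$ with $c+\mathbb N\subseteq v(R)$, $\delta=\ell_R(\overline R/R)$, $r=\ell_R((R:_K\mathfrak m)/R)$, $b=(c-\delta)r-\delta$, $e$ the least positive element of $v(R)$. Let $x\in\mathfrak m$ with $v(x)=e$ and $k=\ell_R(R/(\mathfrak C+xR))$. Let $p$ be the integer with $c-e\le pe<c$ and $h=(p+1)e-c$. When $k=2$, $y_1$ is the unique $y\in v(R)$ with $0<y<c$ and $y-e\notin v(R)$, and $l_1\ge0$ is the integer with $y_1+l_1e<c\le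 y_1+(l_1+1)e$; then $v(R)=\{0,e,\dots,pe\}\cup\{m\ge c\}\cup\{y_1,y_1+e,\dots,y_1+l_1e\}$. *)

theory Defs
  imports "HOL-Computational_Algebra.Polynomial"
begin

text \<open>The quotient field K is modelled as a type of class field; R, its
  integral closure, ideals and fractional ideals are subsets of K.\<close>

definition is_subring :: "'a::field set \<Rightarrow> bool" where
  "is_subring R \<longleftrightarrow> 0 \<in> R \<and> 1 \<in> R \<and> (\<forall>a\<in>R. \<forall>b\<in>R. a + b \<in> R \<and> a * b \<in> R) \<and> (\<forall>a\<in>R. - a \<in> R)"

definition quotient_field_is_univ :: "'a::field set \<Rightarrow> bool" where
  "quotient_field_is_univ R \<longleftrightarrow> (\<forall>z. \<exists>a\<in>R. \<exists>b\<in>R. b \<noteq> 0 \<and> z = a / b)"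

definition rsubmod :: "'a::field set \<Rightarrow> 'a set \<Rightarrow> bool" where
  "rsubmod R M \<longleftrightarrow> 0 \<in> M \<and> (\<forall>a\<in>M. \<forall>b\<in>M. a + b \<in> M) \<and> (\<forall>s\<in>R. \<forall>a\<in>M. s * a \<in> M)"

definition rideal :: "'a::field set \<Rightarrow> 'a set \<Rightarrow> bool" where
  "rideal R I \<longleftrightarrow> I \<subseteq> R \<and> rsubmod R I"

definition rprime :: "'a::field set \<Rightarrow> 'a set \<Rightarrow> bool" where
  "rprime R P \<longleftrightarrow> rideal R P \<and> P \<noteq> R \<and> (\<forall>a\<in>R. \<forall>b\<in>R. a * b \<in> P \<longrightarrow> a \<in> P \<or> b \<in> P)"

definition rspan :: "'a::field set \<Rightarrow> 'a set \<Rightarrow> 'a set" where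
  "rspan R F = {(\<Sum>f\<in>F. g f * f) | g. \<forall>f\<in>F. g f \<in> R}"

definition noetherian :: "'a::field set \<Rightarrow> bool" where
  "noetherian R \<longleftrightarrow> (\<forall>I. rideal R I \<longrightarrow> (\<exists>F. finite F \<and> F \<subseteq> R \<and> I = rspan R F))"

text \<open>The set of non-units of R; R is local iff this is an ideal (the maximal ideal).\<close>
definition max_ideal :: "'a::field set \<Rightarrow> 'a set" where
  "max_ideal R = {a\<in>R. \<forall>b\<in>R. a * b \<noteq> 1}"

definition local_ring :: "'a::field set \<Rightarrow> bool" where
  "local_ring R \<longleftrightarrow> rideal R (max_ideal R)"

text \<open>Krull dimension one (R is a domain, so the zero ideal is prime).\<close>
definition krull_dim_one :: "'a::field set \<Rightarrow> bool" where
  "krull_dim_one R \<longleftrightarrow> (\<exists>P. rprime R P \<and> P \<noteq> {0}) \<and>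
     (\<forall>P Q. rprime R P \<longrightarrow> rprime R Q \<longrightarrow> P \<subset> Q \<longrightarrow> P = {0})"

text \<open>A one-dimensional local ring is regular iff its maximal ideal is principal.\<close>
definition regular_dim_one :: "'a::field set \<Rightarrow> bool" where
  "regular_dim_one R \<longleftrightarrow> (\<exists>t\<in>R. max_ideal R = {t * a | a. a \<in> R})"

definition int_closure :: "'a::field set \<Rightarrow> 'a set" where
  "int_closure R = {z. \<exists>q :: 'a poly. lead_coeff q = 1 \<and> (\<forall>i. coeff q i \<in> R) \<and> poly q z = 0}"

text \<open>v is a normalized discrete valuation of K whose valuation ring is V
  (values of 0 are irrelevant).\<close>
definition normalized_dvr_valuation :: "('a::field \<Rightarrow> int) \<Rightarrow> 'a set \<Rightarrow> bool" where
  "normalized_dvr_valuation v V \<longleftrightarrow>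
     (\<forall>a b. a \<noteq> 0 \<longrightarrow> b \<noteq> 0 \<longrightarrow> v (a * b) = v a + v b) \<and>
     (\<forall>a b. a \<noteq> 0 \<longrightarrow> b \<noteq> 0 \<longrightarrow> a + b \<noteq> 0 \<longrightarrow> min (v a) (v b) \<le> v (a + b)) \<and>
     (\<exists>t. t \<noteq> 0 \<and> v t = 1) \<and>
     V = {z. z = 0 \<or> 0 \<le> v z}"

text \<open>Length of the R-module M/N, for R-submodules N \<subseteq> M of K: the supremum of
  lengths of strict chains of R-submodules from N to M.\<close>
definition rlength :: "'a::field set \<Rightarrow> 'a set \<Rightarrow> 'a set \<Rightarrow> nat" where
  "rlength R N M = Sup {n. \<exists>f :: nat \<Rightarrow> 'a set. f 0 = N \<and> f n = M \<and>
       (\<forall>i\<le>n. rsubmod R (f i)) \<and> (\<forall>i<n. f i \<subset> f (Suc i))}"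

definition colon :: "'a::field set \<Rightarrow> 'a set \<Rightarrow> 'a set" where
  "colon R M = {z. \<forall>a\<in>M. z * a \<in> R}"

definition value_set :: "('a::field \<Rightarrow> int) \<Rightarrow> 'a set \<Rightarrow> int set" where
  "value_set v R = v ` (R - {0})"

end

theory Submission
  imports Defs
begin

locale vr =
  fixes R :: "'a::field set" and v :: "'a \<Rightarrow> int"
  assumes sub: "is_subring R"
    and vmult: "\<And>a b. a \<noteq> 0 \<Longrightarrow> b \<noteq> 0 \<Longrightarrow> v (a * b) = v a + v b"
    and vadd: "\<And>a b. a \<noteq> 0 \<Longrightarrow> b \<noteq> 0 \<Longrightarrow> a + b \<noteq> 0 \<Longrightarrow> min (v a) (v b) \<le> v (a + b)"
    and Rv: "\<And>a. a \<in> R \<Longrightarrow> a \<noteq> 0 \<Longrightarrow> 0 \<le> v a"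
    and rr: "\<And>z. z \<noteq> 0 \<Longrightarrow> 0 \<le> v z \<Longrightarrow> \<exists>a\<in>R. z - a = 0 \<or> 0 < v (z - a)"
begin

definition vals :: "'a set \<Rightarrow> int set" where "vals M = v ` (M - {0})"

lemma R0: "0 \<in> R" and R1: "1 \<in> R" and Radd: "a \<in> R \<Longrightarrow> b \<in> R \<Longrightarrow> a + b \<in> R"
  and Rmult: "a \<in> R \<Longrightarrow> b \<in> R \<Longrightarrow> a * b \<in> R" and Rneg: "a \<in> R \<Longrightarrow> - a \<in> R"
  using sub unfolding is_subring_def by auto

lemma Rpow: "a \<in> R \<Longrightarrow> a ^ n \<in> R"
  by (induction n) (auto intro: R1 Rmult)

lemma v1: "v 1 = 0"
  using vmult[of 1 1] by simp

lemma vneg1: "v (-1) = 0"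
  using vmult[of "-1" "-1"] v1 by simp

lemma vneg: "a \<noteq> 0 \<Longrightarrow> v (- a) = v a"
  using vmult[of "-1" a] vneg1 by simp

lemma vdiv: "z \<noteq> 0 \<Longrightarrow> n \<noteq> 0 \<Longrightarrow> v (z / n) = v z - v n"
  using vmult[of n "z/n"] by simp

lemma vpow: "t \<noteq> 0 \<Longrightarrow> v (t ^ n) = int n * v t"
  by (induction n) (auto simp: v1 vmult algebra_simps)

lemma vstrict: "a \<noteq> 0 \<Longrightarrow> b \<noteq> 0 \<Longrightarrow> v a < v b \<Longrightarrow> a + b \<noteq> 0 \<and> v (a + b) = v a"
proof -
  assume a: "a \<noteq> 0" "b \<noteq> 0" "v a < v b"
  have ab: "a + b \<noteq> 0"
  proof
    assume "a + b = 0" then have "b = - a" by (simp add: eq_neg_iff_add_eq_0 add.commute)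
    then show False using a vneg by simp
  qed
  have 1: "min (v a) (v b) \<le> v (a + b)" using vadd a ab by blast
  have 2: "min (v (a+b)) (v (-b)) \<le> v ((a + b) + (-b))" using vadd[of "a+b" "-b"] a ab by simp
  show ?thesis using 1 2 ab a vneg[of b] by auto
qed

lemma vmul_ge: "s \<in> R \<Longrightarrow> s \<noteq> 0 \<Longrightarrow> a \<noteq> 0 \<Longrightarrow> v a \<le> v (s * a)"
  using vmult Rv by fastforce

lemma approx:
  assumes N: "rsubmod R N" and M: "rsubmod R M"
    and T: "\<And>w. w \<in> M \<Longrightarrow> w \<noteq> 0 \<Longrightarrow> T \<le> v w \<Longrightarrow> w \<in> N"
    and V: "\<And>w. w \<in> M \<Longrightarrow> w \<noteq> 0 \<Longrightarrow> \<exists>n\<in>N \<inter> M. n \<noteq> 0 \<and> v n = v w"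
    and z: "z \<in> M"
  shows "z \<in> N"
proof -
  have "\<forall>z. z \<in> M \<longrightarrow> nat (T - v z) = m \<longrightarrow> z \<in> N" for m
  proof (induction m rule: less_induct)
    case (less m)
    show ?case
    proof (intro allI impI)
      fix z assume zM: "z \<in> M" and m: "nat (T - v z) = m"
      show "z \<in> N"
      proof (cases "z = 0")
        case True then show ?thesis using N unfolding rsubmod_def by simp
      next
        case z0: False
        show ?thesis
        proof (cases "T \<le> v z")
          case True then show ?thesis using T zM z0 by blast
        next
          case False
          obtain n where n: "n \<in> N" "n \<in> M" "n \<noteq> 0" "v n = v z" using V zM z0 by blast
          define u where "u = z / n"
          have u0: "u \<noteq> 0" using z0 n by (simp add: u_def)
          have vu: "v u = 0" using vdiv z0 n by (simp add: u_def)
          obtain a where a: "a \<in> R" "u - a = 0 \<or> 0 < v (u - a)" using rr[OF u0] vu by auto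
          have zu: "z = n * u" using n by (simp add: u_def)
          have anN: "a * n \<in> N" using N a n unfolding rsubmod_def by blast
          show ?thesis
          proof (cases "u - a = 0")
            case True then have "z = a * n" using zu by (simp add: algebra_simps)
            then show ?thesis using anN by simp
          next
            case ua: False
            define w where "w = z + (-a) * n"
            have w: "w = n * (u - a)" using zu by (simp add: w_def algebra_simps)
            have wM: "w \<in> M" using M a n zM Rneg unfolding rsubmod_def w_def by blast
            have w0: "w \<noteq> 0" using w ua n by simp
            have vw: "v w > v z" using w vmult[of n "u-a"] n ua a by simp
            have "nat (T - v w) < m" using m vw False by simp
            then have wN: "w \<in> N" using less wM by blast
            have "z = w + a * n" by (simp add: w_def)
            then show ?thesis using wN anN N unfolding rsubmod_def by simp
          qed
        qed
      qed
    qed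
  qed
  then show ?thesis using z by blast
qed

end

locale vrc = vr +
  fixes c :: int
  assumes Cin: "\<And>w. w \<noteq> 0 \<Longrightarrow> c \<le> v w \<Longrightarrow> w \<in> R"
begin

definition Cs :: "'a set" where "Cs = {w. w = 0 \<or> c \<le> v w}"

lemma eqv:
  assumes N: "rsubmod R N" and M: "rsubmod R M" and NM: "N \<subseteq> M" and CN: "Cs \<subseteq> N"
    and V: "vals M \<subseteq> vals N"
  shows "M \<subseteq> N"
proof
  fix z assume z: "z \<in> M"
  show "z \<in> N"
  proof (rule approx[OF N M _ _ z, of c])
    fix w assume "w \<in> M" "w \<noteq> 0" "c \<le> v w" then show "w \<in> N" using CN by (auto simp: Cs_def)
  next
    fix w assume "w \<in> M" "w \<noteq> 0"
    then have "v w \<in> vals N" using V by (auto simp: vals_def)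
    then show "\<exists>n\<in>N \<inter> M. n \<noteq> 0 \<and> v n = v w" using NM by (auto simp: vals_def)
  qed
qed

lemma vals_mono: "A \<subseteq> B \<Longrightarrow> vals A \<subseteq> vals B"
  by (auto simp: vals_def)

lemma Dfin:
  assumes NM: "N \<subseteq> M" and CN: "Cs \<subseteq> N" and L: "\<And>w. w \<in> M \<Longrightarrow> w \<noteq> 0 \<Longrightarrow> L \<le> v w"
  shows "vals M - vals N \<subseteq> {L..<c}" "finite (vals M - vals N)"
proof -
  show 1: "vals M - vals N \<subseteq> {L..<c}"
  proof
    fix g assume "g \<in> vals M - vals N"
    then obtain w where w: "w \<in> M" "w \<noteq> 0" "v w = g" "g \<notin> vals N" by (auto simp: vals_def)
    have "\<not> c \<le> g"
    proof
      assume "c \<le> g" then have "w \<in> N" using CN w by (auto simp: Cs_def)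
      then show False using w by (auto simp: vals_def)
    qed
    then show "g \<in> {L..<c}" using L w by auto
  qed
  show "finite (vals M - vals N)" using finite_subset[OF 1] by simp
qed

lemma chain_upper:
  assumes N: "rsubmod R N" and M: "rsubmod R M" and NM: "N \<subseteq> M" and CN: "Cs \<subseteq> N"
    and L: "\<And>w. w \<in> M \<Longrightarrow> w \<noteq> 0 \<Longrightarrow> L \<le> v w"
    and f: "f 0 = N" "f n = M" "\<forall>i\<le>n. rsubmod R (f i)" "\<forall>i<n. f i \<subset> f (Suc i)"
  shows "n \<le> card (vals M - vals N)"
proof -
  have fin: "finite (vals M - vals N)" using Dfin[OF NM CN L] by blast
  have mono: "i \<le> j \<Longrightarrow> j \<le> n \<Longrightarrow> f i \<subseteq> f j" for i j
  proof (induction j)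
    case 0 then show ?case by simp
  next
    case (Suc j) then show ?case using f(4) by (metis Suc_leD Suc_le_lessD le_SucE order.refl psubset_imp_subset subset_trans)
  qed
  have "i \<le> n \<Longrightarrow> i \<le> card (vals (f i) - vals N)" for i
  proof (induction i)
    case 0 then show ?case by simp
  next
    case (Suc i)
    have sub1: "f i \<subset> f (Suc i)" using f(4) Suc by simp
    have Ni: "N \<subseteq> f i" using mono[of 0 i] f Suc by simp
    have "\<not> vals (f (Suc i)) \<subseteq> vals (f i)"
    proof
      assume "vals (f (Suc i)) \<subseteq> vals (f i)"
      then have "f (Suc i) \<subseteq> f i" using eqv[of "f i" "f (Suc i)"] f(3) Suc sub1 Ni CN by auto
      then show False using sub1 by auto
    qed
    then have "vals (f i) - vals N \<subset> vals (f (Suc i)) - vals N"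
      using vals_mono[of "f i" "f (Suc i)"] vals_mono[OF Ni] sub1 by auto
    moreover have "finite (vals (f (Suc i)) - vals N)"
      using mono[of "Suc i" n] f Suc vals_mono fin by (meson Diff_mono finite_subset order_refl)
    ultimately have "card (vals (f i) - vals N) < card (vals (f (Suc i)) - vals N)"
      by (rule psubset_card_mono[rotated])
    then show ?case using Suc by simp
  qed
  then show ?thesis using f(2) by fastforce
qed

lemma chain_exists:
  assumes M: "rsubmod R M" and L: "\<And>w. w \<in> M \<Longrightarrow> w \<noteq> 0 \<Longrightarrow> L \<le> v w"
  shows "rsubmod R N \<Longrightarrow> N \<subseteq> M \<Longrightarrow> Cs \<subseteq> N \<Longrightarrow> card (vals M - vals N) = n \<Longrightarrow>
     \<exists>f. f 0 = N \<and> f n = M \<and> (\<forall>i\<le>n. rsubmod R (f i)) \<and> (\<forall>i<n. f i \<subset> f (Suc i))"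
proof (induction n arbitrary: N)
  case 0
  have fin: "finite (vals M - vals N)" using Dfin[OF 0(2,3) L] by blast
  then have "vals M \<subseteq> vals N" using 0 by auto
  then have "M = N" using eqv[OF 0(1) M 0(2,3)] 0(2) by auto
  then show ?case using 0 by (intro exI[of _ "\<lambda>_. N"]) auto
next
  case (Suc n)
  let ?D = "vals M - vals N"
  have fin: "finite ?D" using Dfin[OF Suc(3,4) L] by blast
  have ne: "?D \<noteq> {}" using Suc(5) by (metis card.empty nat.simps(3))
  define g where "g = Max ?D"
  have gD: "g \<in> ?D" unfolding g_def using fin ne by (rule Max_in)
  have gmax: "\<And>d. d \<in> ?D \<Longrightarrow> d \<le> g" using fin by (simp add: g_def)
  define N' where "N' = {a + b | a b. a \<in> N \<and> b \<in> M \<and> (b = 0 \<or> g \<le> v b)}"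
  have NN': "N \<subseteq> N'"
  proof
    fix a assume "a \<in> N" then show "a \<in> N'" unfolding N'_def using M unfolding rsubmod_def
      by (intro CollectI exI[of _ a] exI[of _ 0]) auto
  qed
  have N'M: "N' \<subseteq> M" using Suc(3) M unfolding N'_def rsubmod_def by blast
  have N'sub: "rsubmod R N'"
    unfolding rsubmod_def
  proof (intro conjI ballI)
    show "0 \<in> N'" using NN' Suc(2) unfolding rsubmod_def by auto
  next
    fix a1 a2 assume "a1 \<in> N'" "a2 \<in> N'"
    then obtain x1 y1 x2 y2 where h: "a1 = x1 + y1" "x1 \<in> N" "y1 \<in> M" "y1 = 0 \<or> g \<le> v y1"
      "a2 = x2 + y2" "x2 \<in> N" "y2 \<in> M" "y2 = 0 \<or> g \<le> v y2" unfolding N'_def by blast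
    have "y1 + y2 = 0 \<or> g \<le> v (y1 + y2)"
    proof (cases "y1 = 0 \<or> y2 = 0 \<or> y1 + y2 = 0")
      case True then show ?thesis using h by auto
    next
      case False then show ?thesis using h vadd[of y1 y2] by fastforce
    qed
    moreover have "a1 + a2 = (x1 + x2) + (y1 + y2)" using h by (simp add: algebra_simps)
    ultimately show "a1 + a2 \<in> N'" using h Suc(2) M unfolding N'_def rsubmod_def by blast
  next
    fix s a assume s: "s \<in> R" and "a \<in> N'"
    then obtain x1 y1 where h: "a = x1 + y1" "x1 \<in> N" "y1 \<in> M" "y1 = 0 \<or> g \<le> v y1"
      unfolding N'_def by blast
    have "s * y1 = 0 \<or> g \<le> v (s * y1)"
      using h vmul_ge[OF s] by (cases "s = 0"; cases "y1 = 0") force+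
    moreover have "s * a = s * x1 + s * y1" using h by (simp add: algebra_simps)
    ultimately show "s * a \<in> N'" using h s Suc(2) M unfolding N'_def rsubmod_def by blast
  qed
  have vN': "vals N' = insert g (vals N)"
  proof
    show "insert g (vals N) \<subseteq> vals N'"
    proof -
      obtain w where w: "w \<in> M" "w \<noteq> 0" "v w = g" using gD by (auto simp: vals_def)
      have "w \<in> N'" unfolding N'_def using w Suc(2) unfolding rsubmod_def
        by (intro CollectI exI[of _ 0] exI[of _ w]) auto
      then show ?thesis using w vals_mono[OF NN'] by (auto simp: vals_def)
    qed
  next
    show "vals N' \<subseteq> insert g (vals N)"
    proof
      fix d assume "d \<in> vals N'"
      then obtain a b where h: "a + b \<noteq> 0" "d = v (a + b)" "a \<in> N" "b \<in> M" "b = 0 \<or> g \<le> v b"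
        unfolding vals_def N'_def by blast
      have abM: "a + b \<in> M" using h Suc(3) M unfolding rsubmod_def by blast
      show "d \<in> insert g (vals N)"
      proof (rule ccontr)
        assume nd: "d \<notin> insert g (vals N)"
        have "d \<in> ?D" using nd abM h by (auto simp: vals_def)
        then have dg: "d < g" using gmax nd by force
        show False
        proof (cases "b = 0")
          case True then show False using h nd by (auto simp: vals_def)
        next
          case b0: False
          show False
          proof (cases "a = 0")
            case True then show False using h dg b0 by auto
          next
            case a0: False
            have "min (v a) (v b) \<le> d" using vadd[OF a0 b0 h(1)] h by simp
            then have "v a < v b" using dg h b0 by auto
            then have "d = v a" using vstrict[OF a0 b0] h by auto
            then show False using nd h a0 by (auto simp: vals_def)
          qed
        qed
      qed
    qed
  qed
  have gnot: "g \<notin> vals N" using gD by simp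
  have "vals M - vals N' = ?D - {g}" using vN' by auto
  then have cD': "card (vals M - vals N') = n" using Suc(5) gD fin by simp
  have CN': "Cs \<subseteq> N'" using Suc(4) NN' by auto
  obtain f where f: "f 0 = N'" "f n = M" "\<forall>i\<le>n. rsubmod R (f i)" "\<forall>i<n. f i \<subset> f (Suc i)"
    using Suc.IH[OF N'sub N'M CN' cD'] by blast
  have NpN': "N \<subset> N'" using NN' vN' gnot by auto
  show ?case
  proof (intro exI[of _ "\<lambda>i. if i = 0 then N else f (i - 1)"] conjI allI impI)
    show "(\<lambda>i. if i = 0 then N else f (i - 1)) (Suc n) = M" using f by simp
  next
    fix i assume "i \<le> Suc n" then show "rsubmod R (if i = 0 then N else f (i - 1))" using f Suc(2) by auto
  next
    fix i assume "i < Suc n" then show "(if i = 0 then N else f (i - 1)) \<subset> (if Suc i = 0 then N else f (Suc i - 1))"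
      using f NpN' by (cases i) auto
  qed simp
qed

lemma len:
  assumes N: "rsubmod R N" and M: "rsubmod R M" and NM: "N \<subseteq> M" and CN: "Cs \<subseteq> N"
    and L: "\<And>w. w \<in> M \<Longrightarrow> w \<noteq> 0 \<Longrightarrow> L \<le> v w"
  shows "rlength R N M = card (vals M - vals N)"
  unfolding rlength_def
proof (rule cSup_eq_maximum)
  show "card (vals M - vals N) \<in> {n. \<exists>f. f 0 = N \<and> f n = M \<and> (\<forall>i\<le>n. rsubmod R (f i)) \<and> (\<forall>i<n. f i \<subset> f (Suc i))}"
    using chain_exists[OF M L N NM CN] by blast
next
  fix n assume "n \<in> {n. \<exists>f. f 0 = N \<and> f n = M \<and> (\<forall>i\<le>n. rsubmod R (f i)) \<and> (\<forall>i<n. f i \<subset> f (Suc i))}"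
  then show "n \<le> card (vals M - vals N)" using chain_upper[OF N M NM CN L] by blast
qed

end

context vr begin

lemma Rsum: "finite F \<Longrightarrow> (\<forall>f\<in>F. g f \<in> R) \<Longrightarrow> sum g F \<in> R"
  by (induction F rule: finite_induct) (auto intro: R0 Radd)

lemma Rprod: "finite F \<Longrightarrow> (\<forall>f\<in>F. g f \<in> R) \<Longrightarrow> prod g F \<in> R"
  by (induction F rule: finite_induct) (auto intro: R1 Rmult)

lemma Cs_sub: "rsubmod R {w. w = 0 \<or> c0 \<le> v w}"
  unfolding rsubmod_def
proof (intro conjI ballI)
  fix a b assume "a \<in> {w. w = 0 \<or> c0 \<le> v w}" "b \<in> {w. w = 0 \<or> c0 \<le> v w}"
  then show "a + b \<in> {w. w = 0 \<or> c0 \<le> v w}"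
  proof (cases "a = 0 \<or> b = 0 \<or> a + b = 0")
    case True then show ?thesis using \<open>a \<in> _\<close> \<open>b \<in> _\<close> by auto
  next
    case False
    then have "min (v a) (v b) \<le> v (a + b)" using vadd by blast
    then show ?thesis using False \<open>a \<in> _\<close> \<open>b \<in> _\<close> by auto
  qed
next
  fix s a assume "s \<in> R" "a \<in> {w. w = 0 \<or> c0 \<le> v w}"
  then show "s * a \<in> {w. w = 0 \<or> c0 \<le> v w}"
  proof (cases "s = 0 \<or> a = 0")
    case True then show ?thesis by auto
  next
    case False
    then have "v a \<le> v (s * a)" using vmul_ge \<open>s \<in> R\<close> by blast
    then show ?thesis using False \<open>a \<in> _\<close> by auto
  qed
qed simp

lemma conductor:
  assumes d: "d \<in> R" "d \<noteq> 0" "\<And>z. z \<noteq> 0 \<Longrightarrow> 0 \<le> v z \<Longrightarrow> d * z \<in> R"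
    and S: "{c0..} \<subseteq> vals R" and c0: "0 \<le> c0"
    and w: "w \<noteq> 0" "c0 \<le> v w"
  shows "w \<in> R"
proof -
  have RR: "rsubmod R R" unfolding rsubmod_def using R0 Radd Rmult by blast
  show ?thesis
  proof (rule approx[OF RR Cs_sub[of c0] _ _, of "v d"])
    fix u assume u: "u \<in> {w. w = 0 \<or> c0 \<le> v w}" "u \<noteq> 0" "v d \<le> v u"
    have "d * (u / d) \<in> R" using d(3)[of "u/d"] u d vdiv by simp
    then show "u \<in> R" using d by simp
  next
    fix u assume u: "u \<in> {w. w = 0 \<or> c0 \<le> v w}" "u \<noteq> 0"
    then have "v u \<in> vals R" using S by auto
    then obtain n where "n \<in> R - {0}" "v u = v n" unfolding vals_def by (rule imageE)
    then show "\<exists>n\<in>R \<inter> {w. w = 0 \<or> c0 \<le> v w}. n \<noteq> 0 \<and> v n = v u" using u by auto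
  next
    show "w \<in> {w. w = 0 \<or> c0 \<le> v w}" using w by simp
  qed
qed

end

locale big = vrc +
  fixes e :: int and x :: 'a and y p l :: int and t :: 'a
  assumes cS: "c \<in> vals R" and cS2: "{c..} \<subseteq> vals R"
    and cmin: "\<And>c'. c' \<in> vals R \<Longrightarrow> {c'..} \<subseteq> vals R \<Longrightarrow> c \<le> c'"
    and eS: "e \<in> vals R" and epos: "0 < e" and emin: "\<And>s. s \<in> vals R \<Longrightarrow> 0 < s \<Longrightarrow> e \<le> s"
    and xm: "x \<in> max_ideal R" and x0: "x \<noteq> 0" and vx: "v x = e"
    and mid: "rideal R (max_ideal R)"
    and nonreg: "\<not> regular_dim_one R"
    and t: "t \<noteq> 0" "v t = 1"
    and p_def: "c - e \<le> p * e" "p * e < c"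
    and y_def: "y \<in> vals R" "0 < y" "y < c" "y - e \<notin> vals R"
    and l_def: "0 \<le> l" "y + l * e < c" "c \<le> y + (l + 1) * e"
    and k2: "rlength R {a + x * s | a s. a \<in> colon R {z. z = 0 \<or> 0 \<le> v z} \<and> s \<in> R} R = 2"
begin

lemma xR: "x \<in> R" using xm by (simp add: max_ideal_def)

lemma S0: "0 \<in> vals R" unfolding vals_def using R1 v1 by (intro image_eqI[of _ _ 1]) auto

lemma Sadd: "a \<in> vals R \<Longrightarrow> b \<in> vals R \<Longrightarrow> a + b \<in> vals R"
proof -
  assume a: "a \<in> vals R" and b: "b \<in> vals R"
  obtain u where u: "u \<in> R - {0}" "a = v u" using a unfolding vals_def by (rule imageE)
  obtain w where w: "w \<in> R - {0}" "b = v w" using b unfolding vals_def by (rule imageE)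
  have "a + b = v (u * w)" using vmult[of u w] u w by simp
  moreover have "u * w \<in> R - {0}" using Rmult[of u w] u w by simp
  ultimately show ?thesis unfolding vals_def by (rule image_eqI)
qed

lemma Sge0: "s \<in> vals R \<Longrightarrow> 0 \<le> s" using Rv by (auto simp: vals_def)

lemma Smul: "int n * e \<in> vals R"
proof -
  have "int n * e = v (x ^ n)" using vpow[OF x0, of n] vx by simp
  moreover have "x ^ n \<in> R - {0}" using Rpow[OF xR, of n] x0 by simp
  ultimately show ?thesis unfolding vals_def by (rule image_eqI)
qed

lemma Smul': "0 \<le> i \<Longrightarrow> i * e \<in> vals R"
  using Smul[of "nat i"] by simp

lemma RR: "rsubmod R R" unfolding rsubmod_def using R0 Radd Rmult by simp

lemma CsR: "Cs \<subseteq> R"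
proof
  fix w assume "w \<in> Cs" then show "w \<in> R" using Cin R0 unfolding Cs_def by (cases "w = 0") auto
qed

lemma mR: "max_ideal R \<subseteq> R" unfolding max_ideal_def by (rule Collect_restrict)

lemma m_sub: "rsubmod R (max_ideal R)" using mid by (simp add: rideal_def)

lemma inm: "a \<in> R \<Longrightarrow> a \<noteq> 0 \<Longrightarrow> 0 < v a \<Longrightarrow> a \<in> max_ideal R"
proof -
  assume a: "a \<in> R" "a \<noteq> 0" "0 < v a"
  have "a * b \<noteq> 1" if "b \<in> R" for b
  proof
    assume ab: "a * b = 1"
    then have "b \<noteq> 0" by auto
    then have "v (a * b) > 0" using vmult[of a b] a Rv[OF that] by simp
    then show False using ab v1 by simp
  qed
  then show ?thesis using a by (auto simp: max_ideal_def)
qed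

lemma pos: "a \<in> max_ideal R \<Longrightarrow> a \<noteq> 0 \<Longrightarrow> 0 < v a"
proof (rule ccontr)
  assume a: "a \<in> max_ideal R" "a \<noteq> 0" "\<not> 0 < v a"
  have aR: "a \<in> R" using a mR by auto
  then have va: "v a = 0" using Rv a by force
  define N where "N = {a * s | s. s \<in> R}"
  have Nsub: "rsubmod R N" unfolding rsubmod_def N_def
  proof (intro conjI ballI)
    show "0 \<in> {a * s |s. s \<in> R}" using R0 by force
  next
    fix u w assume "u \<in> {a * s |s. s \<in> R}" "w \<in> {a * s |s. s \<in> R}"
    then obtain s1 s2 where "u = a * s1" "w = a * s2" "s1 \<in> R" "s2 \<in> R" by auto
    then show "u + w \<in> {a * s |s. s \<in> R}" using Radd by (intro CollectI exI[of _ "s1 + s2"]) (auto simp: algebra_simps)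
  next
    fix r u assume "r \<in> R" "u \<in> {a * s |s. s \<in> R}"
    then obtain s1 where "u = a * s1" "s1 \<in> R" by auto
    then show "r * u \<in> {a * s |s. s \<in> R}" using Rmult \<open>r \<in> R\<close> by (intro CollectI exI[of _ "r * s1"]) (auto simp: algebra_simps)
  qed
  have NR: "N \<subseteq> R" using aR Rmult by (auto simp: N_def)
  have CN: "Cs \<subseteq> N"
  proof
    fix w assume w: "w \<in> Cs"
    show "w \<in> N"
    proof (cases "w = 0")
      case True then show ?thesis using R0 by (auto simp: N_def)
    next
      case False
      then have "w / a \<in> R" using w Cin[of "w/a"] vdiv[of w a] va a by (simp add: Cs_def)
      moreover have "w = a * (w / a)" using a by simp
      ultimately have "w = a * (w / a) \<and> w / a \<in> R" by simp
      then show ?thesis unfolding N_def by (intro CollectI exI[of _ "w/a"]) simp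
    qed
  qed
  have "vals R \<subseteq> vals N"
  proof
    fix g assume "g \<in> vals R"
    then obtain s where s: "s \<in> R" "s \<noteq> 0" "v s = g" by (auto simp: vals_def)
    then have "a * s \<in> N" "a * s \<noteq> 0" "v (a * s) = g" using vmult[of a s] va a by (auto simp: N_def)
    then show "g \<in> vals N" unfolding vals_def by force
  qed
  then have "R \<subseteq> N" using eqv[OF Nsub RR NR CN] by simp
  then obtain s where "s \<in> R" "1 = a * s" using R1 by (auto simp: N_def)
  then show False using a by (auto simp: max_ideal_def)
qed

lemma pos_e: "a \<in> max_ideal R \<Longrightarrow> a \<noteq> 0 \<Longrightarrow> e \<le> v a"
  using pos emin mR unfolding vals_def by blast

lemma c_nonneg: "0 \<le> c" using Sge0 cS by simp

lemma c_pos: "0 < c"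
proof (rule ccontr)
  assume "\<not> 0 < c"
  then have c0: "c = 0" using c_nonneg by simp
  have "1 \<in> vals R" using cS2 c0 by auto
  then have e1: "e = 1" using emin[of 1] epos by simp
  have "max_ideal R = {x * a | a. a \<in> R}"
  proof
    show "max_ideal R \<subseteq> {x * a | a. a \<in> R}"
    proof
      fix b assume b: "b \<in> max_ideal R"
      show "b \<in> {x * a | a. a \<in> R}"
      proof (cases "b = 0")
        case True then show ?thesis using R0 by force
      next
        case False
        then have "1 \<le> v b" using pos_e b e1 by simp
        then have "b / x \<in> R" using Cin[of "b/x"] vdiv[of b x] x0 vx e1 c0 False by simp
        moreover have "b = x * (b / x)" using x0 by simp
        ultimately show ?thesis by blast
      qed
    qed
  next
    show "{x * a | a. a \<in> R} \<subseteq> max_ideal R"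
      using m_sub xm unfolding rsubmod_def by (auto simp: mult.commute)
  qed
  then have "regular_dim_one R" using xR unfolding regular_dim_one_def by blast
  then show False using nonreg by simp
qed

lemma cgap: "c - 1 \<notin> vals R"
proof
  assume "c - 1 \<in> vals R"
  moreover have "{c - 1..} \<subseteq> vals R"
  proof
    fix g assume "g \<in> {c - 1..}"
    then show "g \<in> vals R" using cS2 \<open>c - 1 \<in> vals R\<close> by (cases "g = c - 1") auto
  qed
  ultimately have "c \<le> c - 1" using cmin by blast
  then show False by simp
qed

lemma c_ge_e: "e \<le> c" using emin[OF cS c_pos] .

lemma y_gt_e: "e < y"
proof -
  have "e \<le> y" using emin y_def by blast
  moreover have "y \<noteq> e" using y_def S0 by auto
  ultimately show ?thesis by simp
qed

lemma y_nmul: "y \<noteq> j * e"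
proof
  assume yj: "y = j * e"
  have "0 < j * e" using yj y_def by simp
  then have "0 < j" using epos by (simp add: zero_less_mult_iff)
  then have "(j - 1) * e \<in> vals R" using Smul' by simp
  then show False using yj y_def by (simp add: algebra_simps)
qed

lemma vt: "v (t ^ n) = int n" "t ^ n \<noteq> 0" using vpow[OF t(1)] t by auto

lemma colonC: "colon R {z. z = 0 \<or> 0 \<le> v z} = Cs"
proof
  show "colon R {z. z = 0 \<or> 0 \<le> v z} \<subseteq> Cs"
  proof
    fix z assume z: "z \<in> colon R {z. z = 0 \<or> 0 \<le> v z}"
    then have zR: "z \<in> R" using v1 unfolding colon_def by (metis (mono_tags, lifting) mem_Collect_eq mult.right_neutral order_refl)
    show "z \<in> Cs"
    proof (rule ccontr)
      assume nz: "z \<notin> Cs"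
      then have z0: "z \<noteq> 0" and lt: "v z < c" by (auto simp: Cs_def)
      have vz: "0 \<le> v z" using Rv zR z0 by simp
      define j where "j = nat (c - 1 - v z)"
      have "z * t ^ j \<in> R" using z vt[of j] unfolding colon_def by simp
      moreover have "z * t ^ j \<noteq> 0" using z0 vt by simp
      moreover have "v (z * t ^ j) = c - 1" using vmult[OF z0 vt(2)[of j]] vt(1)[of j] lt by (simp add: j_def)
      ultimately have "c - 1 \<in> vals R" unfolding vals_def by (metis DiffI empty_iff image_eqI insert_iff)
      then show False using cgap by simp
    qed
  qed
next
  show "Cs \<subseteq> colon R {z. z = 0 \<or> 0 \<le> v z}"
  proof
    fix z assume z: "z \<in> Cs"
    show "z \<in> colon R {z. z = 0 \<or> 0 \<le> v z}"
      unfolding colon_def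
    proof (intro CollectI ballI)
      fix a assume a: "a \<in> {z. z = 0 \<or> 0 \<le> v z}"
      show "z * a \<in> R"
      proof (cases "z = 0 \<or> a = 0")
        case True then show ?thesis using R0 by auto
      next
        case False
        then have "c \<le> v (z * a)" using vmult[of z a] z a by (auto simp: Cs_def)
        then show ?thesis using Cin False by simp
      qed
    qed
  qed
qed

lemma Aelem:
  assumes s: "s \<in> vals R" "s < c" "s - e \<notin> vals R"
  shows "s = 0 \<or> s = y"
proof -
  define Nk where "Nk = {a + x * s | a s. a \<in> colon R {z. z = 0 \<or> 0 \<le> v z} \<and> s \<in> R}"
  have Nk: "Nk = {a + x * s | a s. a \<in> Cs \<and> s \<in> R}" using colonC by (simp add: Nk_def)
  have Cs0: "0 \<in> Cs" by (simp add: Cs_def)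
  have Nksub: "rsubmod R Nk" unfolding rsubmod_def Nk
  proof (intro conjI ballI)
    show "0 \<in> {a + x * s | a s. a \<in> Cs \<and> s \<in> R}" using Cs0 R0 by force
  next
    fix u w assume "u \<in> {a + x * s | a s. a \<in> Cs \<and> s \<in> R}" "w \<in> {a + x * s | a s. a \<in> Cs \<and> s \<in> R}"
    then obtain a1 s1 a2 s2 where h: "u = a1 + x * s1" "a1 \<in> Cs" "s1 \<in> R" "w = a2 + x * s2" "a2 \<in> Cs" "s2 \<in> R" by blast
    have CC: "rsubmod R Cs" using Cs_sub[of c] by (simp add: Cs_def)
    have "a1 + a2 \<in> Cs" using CC h unfolding rsubmod_def by simp
    moreover have "s1 + s2 \<in> R" using Radd h by simp
    moreover have "u + w = (a1 + a2) + x * (s1 + s2)" using h by (simp add: algebra_simps)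
    ultimately show "u + w \<in> {a + x * s | a s. a \<in> Cs \<and> s \<in> R}" by blast
  next
    fix r u assume r: "r \<in> R" and "u \<in> {a + x * s | a s. a \<in> Cs \<and> s \<in> R}"
    then obtain a1 s1 where h: "u = a1 + x * s1" "a1 \<in> Cs" "s1 \<in> R" by blast
    have CC: "rsubmod R Cs" using Cs_sub[of c] by (simp add: Cs_def)
    have "r * a1 \<in> Cs" using CC h r unfolding rsubmod_def by simp
    moreover have "r * s1 \<in> R" using Rmult h r by simp
    moreover have "r * u = (r * a1) + x * (r * s1)" using h by (simp add: algebra_simps)
    ultimately show "r * u \<in> {a + x * s | a s. a \<in> Cs \<and> s \<in> R}" by blast
  qed
  have NkR: "Nk \<subseteq> R"
  proof
    fix u assume "u \<in> Nk"
    then obtain a1 s1 where h: "u = a1 + x * s1" "a1 \<in> Cs" "s1 \<in> R" unfolding Nk by blast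
    have "a1 \<in> R" using CsR h by blast
    moreover have "x * s1 \<in> R" using Rmult[OF xR h(3)] .
    ultimately show "u \<in> R" using Radd h(1) by simp
  qed
  have CNk: "Cs \<subseteq> Nk"
  proof
    fix a assume "a \<in> Cs"
    then have "a = a + x * 0 \<and> a \<in> Cs \<and> 0 \<in> R" using R0 by simp
    then show "a \<in> Nk" unfolding Nk by blast
  qed
  have L: "\<And>w. w \<in> R \<Longrightarrow> w \<noteq> 0 \<Longrightarrow> 0 \<le> v w" using Rv by simp
  have "rlength R Nk R = 2" using k2 unfolding Nk_def .
  then have card2: "card (vals R - vals Nk) = 2"
    using len[OF Nksub RR NkR CNk L] by simp
  have fin: "finite (vals R - vals Nk)" using Dfin[OF NkR CNk L] by blast
  have vNk: "g \<in> vals Nk \<Longrightarrow> c \<le> g \<or> g - e \<in> vals R" for g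
  proof -
    assume "g \<in> vals Nk"
    then obtain u where u: "u \<in> Nk - {0}" "g = v u" unfolding vals_def by (rule imageE)
    then obtain a1 s1 where h: "u = a1 + x * s1" "a1 \<in> Cs" "s1 \<in> R" unfolding Nk by blast
    have u0: "u \<noteq> 0" using u by simp
    show ?thesis
    proof (cases "s1 = 0")
      case True then show ?thesis using h u by (auto simp: Cs_def)
    next
      case s0: False
      have xs0: "x * s1 \<noteq> 0" using s0 x0 by simp
      have vxs: "v (x * s1) = e + v s1" using vmult[OF x0 s0] vx by simp
      have s1S: "v s1 \<in> vals R" using h s0 unfolding vals_def by blast
      show ?thesis
      proof (cases "a1 = 0")
        case True then show ?thesis using h u vxs s1S by simp
      next
        case a0: False
        have ca: "c \<le> v a1" using a0 h by (simp add: Cs_def)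
        consider "v a1 < v (x * s1)" | "v (x * s1) < v a1" | "v a1 = v (x * s1)" by linarith
        then show ?thesis
        proof cases
          case 1 then show ?thesis using vstrict[OF a0 xs0] h u ca by simp
        next
          case 2 then have "v u = v (x * s1)" using vstrict[OF xs0 a0] h by (simp add: add.commute)
          then show ?thesis using u vxs s1S by simp
        next
          case 3 then have "min (v a1) (v (x * s1)) \<le> v u" using vadd[OF a0 xs0] h u0 by simp
          then show ?thesis using 3 ca u by simp
        qed
      qed
    qed
  qed
  have AD: "g \<in> vals R - vals Nk" if "g \<in> vals R" "g < c" "g - e \<notin> vals R" for g
  proof -
    have "g \<notin> vals Nk" using vNk[of g] that by auto
    then show ?thesis using that by simp
  qed
  have neg: "0 - e \<notin> vals R" using Sge0 epos by force
  show ?thesis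
  proof (rule ccontr)
    assume ns: "\<not> (s = 0 \<or> s = y)"
    have sub: "{0, y, s} \<subseteq> vals R - vals Nk"
      using AD[OF s] AD[OF S0 c_pos neg] AD[OF y_def(1) y_def(3) y_def(4)] by simp
    have c3: "card {0, y, s} = 3" using ns y_def(2) by simp
    have "card {0, y, s} \<le> card (vals R - vals Nk)" by (rule card_mono[OF fin sub])
    then show False using c3 card2 by simp
  qed
qed

lemma F1:
  "s \<in> vals R \<Longrightarrow> s < c \<Longrightarrow> (\<exists>i. 0 \<le> i \<and> i \<le> p \<and> s = i * e) \<or> (\<exists>i. 0 \<le> i \<and> i \<le> l \<and> s = y + i * e)"
proof (induction "nat s" arbitrary: s rule: less_induct)
  case less
  show ?case
  proof (cases "s - e \<in> vals R")
    case False
    then have "s = 0 \<or> s = y" using Aelem less by blast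
    moreover have "0 \<le> p" 
    proof -
      have "0 < (p + 1) * e" using p_def c_pos by (simp add: algebra_simps)
      then show ?thesis using epos by (simp add: zero_less_mult_iff)
    qed
    ultimately show ?thesis using l_def(1) by (metis add.right_neutral mult_zero_left order_refl)
  next
    case True
    have "0 \<le> s - e" using Sge0[OF True] .
    then have "nat (s - e) < nat s" using epos by simp
    then have IH: "(\<exists>i. 0 \<le> i \<and> i \<le> p \<and> s - e = i * e) \<or> (\<exists>i. 0 \<le> i \<and> i \<le> l \<and> s - e = y + i * e)"
      using less True by simp
    then show ?thesis
    proof
      assume "\<exists>i. 0 \<le> i \<and> i \<le> p \<and> s - e = i * e"
      then obtain i where i: "0 \<le> i" "i \<le> p" "s - e = i * e" by blast
      have "(i + 1) * e < (p + 1) * e"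
      proof -
        have "(i + 1) * e = s" using i by (simp add: algebra_simps)
        moreover have "c \<le> (p + 1) * e" using p_def by (simp add: algebra_simps)
        ultimately show ?thesis using less(3) by linarith
      qed
      then have "i + 1 \<le> p" using epos by (simp add: mult_less_cancel_right_pos)
      then show ?thesis using i by (intro disjI1 exI[of _ "i + 1"]) (simp add: algebra_simps)
    next
      assume "\<exists>i. 0 \<le> i \<and> i \<le> l \<and> s - e = y + i * e"
      then obtain i where i: "0 \<le> i" "i \<le> l" "s - e = y + i * e" by blast
      have "(i + 1) * e < (l + 1) * e"
      proof -
        have "y + (i + 1) * e = s" using i by (simp add: algebra_simps)
        then show ?thesis using less(3) l_def(3) by linarith
      qed
      then have "i + 1 \<le> l" using epos by (simp add: mult_less_cancel_right_pos)
      then show ?thesis using i by (intro disjI2 exI[of _ "i + 1"]) (simp add: algebra_simps)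
    qed
  qed
qed

lemma p_nonneg: "0 \<le> p"
proof -
  have "0 < (p + 1) * e" using p_def c_pos by (simp add: algebra_simps)
  then show ?thesis using epos by (simp add: zero_less_mult_iff)
qed

lemma ySe: "0 \<le> i \<Longrightarrow> y + i * e \<in> vals R" using Sadd[OF y_def(1) Smul'] by simp

definition PP where "PP = (\<lambda>i. i * e) ` {0..p}"
definition YY where "YY = (\<lambda>i. y + i * e) ` {0..l}"

lemma PY_S: "PP \<union> YY \<subseteq> vals R" using Smul' ySe by (auto simp: PP_def YY_def)

lemma PY_c: "PP \<union> YY \<subseteq> {0..<c}"
proof
  fix g assume g: "g \<in> PP \<union> YY"
  then have "g \<in> vals R" using PY_S by blast
  then have g0: "0 \<le> g" using Sge0 by simp
  have "g < c"
  proof (cases "g \<in> PP")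
    case True
    then obtain i where i: "0 \<le> i" "i \<le> p" "g = i * e" by (auto simp: PP_def)
    have "i * e \<le> p * e" using i epos by (simp add: mult_right_mono)
    then show ?thesis using i p_def by linarith
  next
    case False
    then obtain i where i: "0 \<le> i" "i \<le> l" "g = y + i * e" using g by (auto simp: YY_def)
    have "i * e \<le> l * e" using i epos by (simp add: mult_right_mono)
    then show ?thesis using i l_def by linarith
  qed
  then show "g \<in> {0..<c}" using g0 by simp
qed

lemma below_c: "s \<in> vals R \<Longrightarrow> s < c \<Longrightarrow> s \<in> PP \<union> YY"
  using F1[of s] by (auto simp: PP_def YY_def)

lemma card_PY: "card (PP \<union> YY) = nat (p + 1) + nat (l + 1)"
proof -
  have inj1: "inj_on (\<lambda>i. i * e) {0..p}" using epos by (auto simp: inj_on_def)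
  have inj2: "inj_on (\<lambda>i. y + i * e) {0..l}" using epos by (auto simp: inj_on_def)
  have cP: "card PP = nat (p + 1)" using card_image[OF inj1] by (simp add: PP_def)
  have cY: "card YY = nat (l + 1)" using card_image[OF inj2] by (simp add: YY_def)
  have disj: "PP \<inter> YY = {}"
  proof (rule ccontr)
    assume "PP \<inter> YY \<noteq> {}"
    then obtain i j where "i * e = y + j * e" by (auto simp: PP_def YY_def)
    then have "y = (i - j) * e" by (simp add: algebra_simps)
    then show False using y_nmul by blast
  qed
  show ?thesis using card_Un_disjoint[of PP YY] disj cP cY by (simp add: PP_def YY_def)
qed

lemma delta: "int (rlength R R {z. z = 0 \<or> 0 \<le> v z}) = c - p - l - 2"
proof -
  define Rb where "Rb = {z. z = 0 \<or> (0::int) \<le> v z}"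
  have Rbsub: "rsubmod R Rb" using Cs_sub[of 0] by (simp add: Rb_def)
  have RRb: "R \<subseteq> Rb" using Rv by (auto simp: Rb_def)
  have L: "\<And>w. w \<in> Rb \<Longrightarrow> w \<noteq> 0 \<Longrightarrow> 0 \<le> v w" by (simp add: Rb_def)
  have l1: "rlength R R Rb = card (vals Rb - vals R)" using len[OF RR Rbsub RRb CsR L] .
  have eq: "vals Rb - vals R = {0..<c} - (PP \<union> YY)"
  proof
    show "vals Rb - vals R \<subseteq> {0..<c} - (PP \<union> YY)"
    proof
      fix g assume g: "g \<in> vals Rb - vals R"
      then obtain z where z: "z \<in> Rb - {0}" "g = v z" unfolding vals_def by blast
      then have "0 \<le> g" by (auto simp: Rb_def)
      moreover have "g < c"
      proof (rule ccontr)
        assume "\<not> g < c" then have "g \<in> vals R" using cS2 by auto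
        then show False using g by simp
      qed
      moreover have "g \<notin> PP \<union> YY" using g PY_S by blast
      ultimately show "g \<in> {0..<c} - (PP \<union> YY)" by simp
    qed
  next
    show "{0..<c} - (PP \<union> YY) \<subseteq> vals Rb - vals R"
    proof
      fix g assume g: "g \<in> {0..<c} - (PP \<union> YY)"
      then have "g = v (t ^ nat g)" using vt by simp
      moreover have "t ^ nat g \<in> Rb - {0}" using vt t(1) by (simp add: Rb_def)
      ultimately have "g \<in> vals Rb" unfolding vals_def by (rule image_eqI)
      moreover have "g \<notin> vals R" using g below_c by auto
      ultimately show "g \<in> vals Rb - vals R" by simp
    qed
  qed
  have "card ({0..<c} - (PP \<union> YY)) = nat c - (nat (p + 1) + nat (l + 1))"
    using card_Diff_subset[OF finite_subset[OF PY_c] PY_c] card_PY by simp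
  moreover have "nat (p + 1) + nat (l + 1) \<le> nat c"
    using card_mono[OF _ PY_c] card_PY by simp
  ultimately show ?thesis using l1 eq p_nonneg l_def(1) c_pos unfolding Rb_def by simp
qed

lemma colon_sub: "rsubmod R (colon R (max_ideal R))"
  unfolding rsubmod_def colon_def
proof (intro conjI ballI CollectI)
  fix a assume "a \<in> max_ideal R" show "0 * a \<in> R" using R0 by simp
next
  fix u w a assume "u \<in> {z. \<forall>a\<in>max_ideal R. z * a \<in> R}" "w \<in> {z. \<forall>a\<in>max_ideal R. z * a \<in> R}" "a \<in> max_ideal R"
  then have "u * a \<in> R" "w * a \<in> R" by auto
  then show "(u + w) * a \<in> R" using Radd by (simp add: algebra_simps)
next
  fix r u a assume "r \<in> R" "u \<in> {z. \<forall>a\<in>max_ideal R. z * a \<in> R}" "a \<in> max_ideal R"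
  then have "u * a \<in> R" by auto
  then show "(r * u) * a \<in> R" using Rmult \<open>r \<in> R\<close> by (simp add: mult.assoc)
qed

lemma R_colon: "R \<subseteq> colon R (max_ideal R)"
proof
  fix a assume "a \<in> R"
  then show "a \<in> colon R (max_ideal R)" unfolding colon_def using mR Rmult by blast
qed

lemma rbound:
  assumes yc: "c \<le> 2 * y - e"
  shows "e - 1 \<le> int (rlength R R (colon R (max_ideal R)))"
proof -
  define M where "M = colon R (max_ideal R)"
  have Msub: "rsubmod R M" using colon_sub by (simp add: M_def)
  have RM: "R \<subseteq> M" using R_colon by (simp add: M_def)
  have L: "- e \<le> v w" if "w \<in> M" "w \<noteq> 0" for w
  proof -
    have "w * x \<in> R" using that xm by (simp add: M_def colon_def)
    moreover have "w * x \<noteq> 0" using that x0 by simp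
    ultimately have "0 \<le> v (w * x)" using Rv by simp
    then show ?thesis using vmult[OF that(2) x0] vx by simp
  qed
  have l1: "rlength R R M = card (vals M - vals R)" using len[OF RR Msub RM CsR L] .
  have fin: "finite (vals M - vals R)" using Dfin[OF RM CsR L] by blast
  define G1 where "G1 = {c - e..<c} - {p * e, y + l * e}"
  have two: "{p * e, y + l * e} \<subseteq> {c - e..<c}"
  proof -
    have "c - e \<le> y + l * e" using l_def(3) by (simp add: algebra_simps)
    then show ?thesis using p_def l_def by simp
  qed
  have dist: "p * e \<noteq> y + l * e"
  proof
    assume "p * e = y + l * e" then have "y = (p - l) * e" by (simp add: algebra_simps)
    then show False using y_nmul by blast
  qed
  have c2: "card {p * e, y + l * e} = 2" using dist by simp
  have ce: "card {c - e..<c} = nat e" by simp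
  have cG1: "card G1 = nat e - 2" unfolding G1_def using card_Diff_subset[OF _ two] c2 ce by simp
  have e2: "2 \<le> nat e" using card_mono[OF _ two] c2 ce by simp
  have G1sub: "G1 \<subseteq> vals M - vals R"
  proof
    fix g assume g: "g \<in> G1"
    then have gi: "c - e \<le> g" "g < c" "g \<noteq> p * e" "g \<noteq> y + l * e" by (auto simp: G1_def)
    have g0: "0 \<le> g" using gi c_ge_e by simp
    define z where "z = t ^ nat g"
    have z0: "z \<noteq> 0" and vz: "v z = g" using vt g0 by (auto simp: z_def)
    have zM: "z \<in> M" unfolding M_def colon_def
    proof (intro CollectI ballI)
      fix b assume b: "b \<in> max_ideal R"
      show "z * b \<in> R"
      proof (cases "b = 0")
        case True then show ?thesis using R0 by simp
      next
        case False
        then have "e \<le> v b" using pos_e b by simp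
        then have "c \<le> v (z * b)" using vmult[OF z0 False] vz gi by simp
        then show ?thesis using Cin z0 False by simp
      qed
    qed
    have "g \<in> vals M" using zM z0 vz unfolding vals_def by (metis DiffI image_eqI singletonD)
    moreover have "g \<notin> vals R"
    proof
      assume "g \<in> vals R"
      then have "g \<in> PP \<union> YY" using below_c gi by simp
      then show False
      proof
        assume "g \<in> PP"
        then obtain i where i: "0 \<le> i" "i \<le> p" "g = i * e" by (auto simp: PP_def)
        then have "i \<le> p - 1" using gi by auto
        then have "i * e \<le> (p - 1) * e" using epos by (simp add: mult_right_mono)
        then show False using i gi p_def by (simp add: algebra_simps)
      next
        assume "g \<in> YY"
        then obtain i where i: "0 \<le> i" "i \<le> l" "g = y + i * e" by (auto simp: YY_def)
        then have "i \<le> l - 1" using gi by auto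
        then have "i * e \<le> (l - 1) * e" using epos by (simp add: mult_right_mono)
        then show False using i gi l_def by (simp add: algebra_simps)
      qed
    qed
    ultimately show "g \<in> vals M - vals R" by simp
  qed
  have yeM: "y - e \<in> vals M - vals R"
  proof -
    obtain w where w: "w \<in> R - {0}" "y = v w" using y_def(1) unfolding vals_def by (rule imageE)
    have wR: "w \<in> R" and w0: "w \<noteq> 0" using w by auto
    have wm: "w \<in> max_ideal R" using inm wR w0 w y_def by simp
    define z where "z = w / x"
    have z0: "z \<noteq> 0" using w0 x0 by (simp add: z_def)
    have vz: "v z = y - e" using vdiv[OF w0 x0] w vx by (simp add: z_def)
    have zx: "z * x = w" using x0 by (simp add: z_def)
    have zxk: "z * x ^ k = w * x ^ (k - 1)" if "1 \<le> k" for k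
    proof -
      have "x ^ k = x * x ^ (k - 1)" using that by (metis le_add_diff_inverse power_add power_one_right)
      then show ?thesis using zx by (simp add: mult.assoc[symmetric])
    qed
    define N where "N = {a \<in> max_ideal R. z * a \<in> R}"
    have Nsub: "rsubmod R N" unfolding rsubmod_def N_def
    proof (intro conjI ballI)
      show "0 \<in> {a \<in> max_ideal R. z * a \<in> R}" using m_sub R0 unfolding rsubmod_def by simp
    next
      fix a b assume a: "a \<in> {a \<in> max_ideal R. z * a \<in> R}" and b: "b \<in> {a \<in> max_ideal R. z * a \<in> R}"
      have "a + b \<in> max_ideal R" using a b m_sub unfolding rsubmod_def by simp
      moreover have "z * (a + b) \<in> R" using a b Radd by (simp add: algebra_simps)
      ultimately show "a + b \<in> {a \<in> max_ideal R. z * a \<in> R}" by simp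
    next
      fix r a assume r: "r \<in> R" and a: "a \<in> {a \<in> max_ideal R. z * a \<in> R}"
      have "r * a \<in> max_ideal R" using a r m_sub unfolding rsubmod_def by simp
      moreover have "z * (r * a) \<in> R"
      proof -
        have "r * (z * a) \<in> R" using a r Rmult by simp
        then show ?thesis by (metis mult.left_commute)
      qed
      ultimately show "r * a \<in> {a \<in> max_ideal R. z * a \<in> R}" by simp
    qed
    have Tc: "b \<in> N" if b: "b \<in> max_ideal R" "b \<noteq> 0" "c \<le> v b" for b
    proof -
      have "c \<le> v (z * b)" using vmult[OF z0 b(2)] vz y_gt_e b by simp
      then have "z * b \<in> R" using Cin z0 b by simp
      then show ?thesis using b by (simp add: N_def)
    qed
    have allN: "b \<in> N" if b: "b \<in> max_ideal R" for b
    proof (rule approx[OF Nsub m_sub _ _ b, of c])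
      fix u assume "u \<in> max_ideal R" "u \<noteq> 0" "c \<le> v u" then show "u \<in> N" using Tc by blast
    next
      fix u assume u: "u \<in> max_ideal R" "u \<noteq> 0"
      have uR: "u \<in> R" using u mR by blast
      have vS: "v u \<in> vals R" using uR u unfolding vals_def by blast
      have vpos: "0 < v u" using pos u by simp
      have key: "\<exists>n\<in>N. n \<noteq> 0 \<and> v n = v u"
      proof (cases "c \<le> v u")
        case True then show ?thesis using Tc u by blast
      next
        case False
        then have "v u \<in> PP \<union> YY" using below_c vS by simp
        then show ?thesis
        proof
          assume "v u \<in> PP"
          then obtain i where i: "0 \<le> i" "i \<le> p" "v u = i * e" by (auto simp: PP_def)
          have i1: "1 \<le> nat i" using i vpos epos by (simp add: zero_less_mult_iff)
          define n where "n = x ^ nat i"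
          have n0: "n \<noteq> 0" using x0 by (simp add: n_def)
          have vn: "v n = v u" using vpow[OF x0] vx i by (simp add: n_def)
          have nR: "n \<in> R" using Rpow xR by (simp add: n_def)
          have nm: "n \<in> max_ideal R" using inm nR n0 vn vpos by simp
          have "z * n \<in> R" using zxk[OF i1] Rmult[OF wR Rpow[OF xR]] by (simp add: n_def)
          then show ?thesis using nm n0 vn by (auto simp: N_def)
        next
          assume "v u \<in> YY"
          then obtain i where i: "0 \<le> i" "i \<le> l" "v u = y + i * e" by (auto simp: YY_def)
          define n where "n = w * x ^ nat i"
          have n0: "n \<noteq> 0" using x0 w0 by (simp add: n_def)
          have vn: "v n = v u" using vmult[OF w0] vpow[OF x0] vx i w x0 by (simp add: n_def)
          have nR: "n \<in> R" using Rmult[OF wR Rpow[OF xR]] by (simp add: n_def)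
          have nm: "n \<in> max_ideal R" using inm nR n0 vn vpos by simp
          have "z * n \<in> R"
          proof (cases "i = 0")
            case True
            have "c \<le> v (z * w)" using vmult[OF z0 w0] vz w yc by simp
            then have "z * w \<in> R" using Cin z0 w0 by simp
            then show ?thesis using True by (simp add: n_def)
          next
            case False
            then have i1: "1 \<le> nat i" using i by simp
            have "z * n = w * (w * x ^ (nat i - 1))" using zxk[OF i1] by (simp add: n_def algebra_simps)
            then show ?thesis using Rmult[OF wR Rmult[OF wR Rpow[OF xR]]] by simp
          qed
          then show ?thesis using nm n0 vn by (auto simp: N_def)
        qed
      qed
      then show "\<exists>n\<in>N \<inter> max_ideal R. n \<noteq> 0 \<and> v n = v u" by (auto simp: N_def)
    qed
    have "z \<in> M" unfolding M_def colon_def using allN by (simp add: N_def)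
    then have "y - e \<in> vals M" using z0 vz unfolding vals_def by (metis DiffI image_eqI singletonD)
    then show ?thesis using y_def by simp
  qed
  have notin: "y - e \<notin> G1" using y_def by (auto simp: G1_def)
  have finG: "finite G1" by (simp add: G1_def)
  have "card (insert (y - e) G1) = nat e - 2 + 1" using notin finG cG1 by simp
  moreover have "card (insert (y - e) G1) \<le> card (vals M - vals R)"
    using card_mono[OF fin] G1sub yeM by simp
  ultimately show ?thesis using l1 e2 M_def by simp
qed

end


lemma arith_final:
  fixes c e \<delta> r b p h y l :: int
  assumes epos: "0 < e" and dl: "\<delta> = c - p - l - 2" and bd: "b = (c - \<delta>) * r - \<delta>"
    and hd: "h = (p + 1) * e - c"
    and p1: "c - e \<le> p * e" and p2: "p * e < c" and p3: "p * e \<noteq> c - 1"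
    and ye: "e < y" and l0: "0 \<le> l" and l2: "y + l * e < c" and l3: "c \<le> y + (l + 1) * e"
    and r2: "r = e - 2 \<longrightarrow> 2 * y - e < c"
  shows "(r = e - 1 \<longrightarrow>
            b = (l + 1) * e + h \<and> b \<le> (l + 2) * e - 2 \<and> (b = (l + 2) * e - 2 \<longleftrightarrow> h = e - 2))
       \<and> (r = e - 2 \<longrightarrow>
            b = (l + 1) * (e - 1) + h - p - 1 \<and> c = (p + l + 2) * (e - 1) - b
          \<and> (l + 1 \<le> p \<and> p \<le> 2 * l + 2 \<and> (p = 2 * l + 2 \<longrightarrow> 0 < h))
          \<and> ((l + 1) * (e - 3) \<le> b \<and> b \<le> (l + 1) * (e - 2) + e - 3)
          \<and> (b = (l + 1) * (e - 3) \<longleftrightarrow> (p = 2 * l + 2 \<and> h = 1) \<or> (p = 2 * l + 1 \<and> h = 0))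
          \<and> (b = (l + 1) * (e - 2) + e - 3 \<longrightarrow> p = l + 1 \<and> 1 < p \<and> h = e - 2 \<and> y = e + 1))"
proof -
  have cd: "c - \<delta> = p + l + 2" using dl by simp
  have h0: "0 \<le> h" using hd p1 by (simp add: algebra_simps)
  have he: "h \<le> e - 2" using hd p2 p3 by (simp add: algebra_simps)
  have part1: "r = e - 1 \<longrightarrow>
            b = (l + 1) * e + h \<and> b \<le> (l + 2) * e - 2 \<and> (b = (l + 2) * e - 2 \<longleftrightarrow> h = e - 2)"
  proof
    assume r: "r = e - 1"
    have "b = (l + 1) * e + h" using bd cd r dl hd by (simp add: algebra_simps)
    then show "b = (l + 1) * e + h \<and> b \<le> (l + 2) * e - 2 \<and> (b = (l + 2) * e - 2 \<longleftrightarrow> h = e - 2)"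
      using he by (simp add: algebra_simps)
  qed
  have part2: "r = e - 2 \<longrightarrow>
            b = (l + 1) * (e - 1) + h - p - 1 \<and> c = (p + l + 2) * (e - 1) - b
          \<and> (l + 1 \<le> p \<and> p \<le> 2 * l + 2 \<and> (p = 2 * l + 2 \<longrightarrow> 0 < h))
          \<and> ((l + 1) * (e - 3) \<le> b \<and> b \<le> (l + 1) * (e - 2) + e - 3)
          \<and> (b = (l + 1) * (e - 3) \<longleftrightarrow> (p = 2 * l + 2 \<and> h = 1) \<or> (p = 2 * l + 1 \<and> h = 0))
          \<and> (b = (l + 1) * (e - 2) + e - 3 \<longrightarrow> p = l + 1 \<and> 1 < p \<and> h = e - 2 \<and> y = e + 1)"
  proof
    assume r: "r = e - 2"
    have yc: "2 * y - e < c" using r2 r by simp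
    have b1: "b = (l + 1) * (e - 1) + h - p - 1" using bd cd r dl hd by (simp add: algebra_simps)
    have b2: "c = (p + l + 2) * (e - 1) - b" using bd cd r dl by (simp add: algebra_simps)
    have "(l + 1) * e < (p + 1) * e" using l2 ye p1 by (simp add: algebra_simps)
    then have lp: "l + 1 \<le> p" using epos by (simp add: mult_less_cancel_right_pos)
    have "p * e < (2 * l + 3) * e" using p2 l3 yc by (simp add: algebra_simps)
    then have p22: "p \<le> 2 * l + 2" using epos by (simp add: mult_less_cancel_right_pos)
    have ph: "p = 2 * l + 2 \<longrightarrow> 0 < h"
    proof
      assume pp: "p = 2 * l + 2"
      show "0 < h"
      proof (rule ccontr)
        assume "\<not> 0 < h" then have "h = 0" using h0 by simp
        then have "c = (2 * l + 3) * e" using hd pp by (simp add: algebra_simps)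
        then show False using l3 yc by (simp add: algebra_simps)
      qed
    qed
    have bx: "b = l * e + e + h - l - p - 2" using b1 by (simp add: algebra_simps)
    have q: "p \<le> 2 * l + 1 + h" using p22 ph h0 by (cases "p = 2 * l + 2") auto
    have low: "(l + 1) * (e - 3) \<le> b \<and> b \<le> (l + 1) * (e - 2) + e - 3"
      using bx lp q he h0 by (simp add: algebra_simps)
    have eq1: "b = (l + 1) * (e - 3) \<longleftrightarrow> (p = 2 * l + 2 \<and> h = 1) \<or> (p = 2 * l + 1 \<and> h = 0)"
      using bx lp p22 ph he h0 by (auto simp: algebra_simps)
    have eq2: "b = (l + 1) * (e - 2) + e - 3 \<longrightarrow> p = l + 1 \<and> 1 < p \<and> h = e - 2 \<and> y = e + 1"
    proof
      assume "b = (l + 1) * (e - 2) + e - 3"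
      then have hp: "h = e - 2" "p = l + 1" using bx lp he by (simp_all add: algebra_simps)
      then have c2: "c = l * e + e + 2" using hd by (simp add: algebra_simps)
      then have y1: "y = e + 1" using l2 ye by simp
      have "1 < p"
      proof (rule ccontr)
        assume "\<not> 1 < p" then have "l = 0" using hp l0 by simp
        then show False using c2 y1 yc by simp
      qed
      then show "p = l + 1 \<and> 1 < p \<and> h = e - 2 \<and> y = e + 1" using hp y1 by simp
    qed
    show "b = (l + 1) * (e - 1) + h - p - 1 \<and> c = (p + l + 2) * (e - 1) - b
          \<and> (l + 1 \<le> p \<and> p \<le> 2 * l + 2 \<and> (p = 2 * l + 2 \<longrightarrow> 0 < h))
          \<and> ((l + 1) * (e - 3) \<le> b \<and> b \<le> (l + 1) * (e - 2) + e - 3)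
          \<and> (b = (l + 1) * (e - 3) \<longleftrightarrow> (p = 2 * l + 2 \<and> h = 1) \<or> (p = 2 * l + 1 \<and> h = 0))
          \<and> (b = (l + 1) * (e - 2) + e - 3 \<longrightarrow> p = l + 1 \<and> 1 < p \<and> h = e - 2 \<and> y = e + 1)"
      using b1 b2 lp p22 ph low eq1 eq2 by blast
  qed
  show ?thesis using part1 part2 by blast
qed


theorem lemma2p3:
  fixes R :: "'a::field set" and v :: "'a \<Rightarrow> int" and x :: 'a
    and c e \<delta> r b k p h y l :: int
  assumes subring: "is_subring R"
    and qf: "quotient_field_is_univ R"
    and noeth: "noetherian R"
    and loc: "local_ring R"
    and dim1: "krull_dim_one R"
    and nonreg: "\<not> regular_dim_one R"
    and dvr: "normalized_dvr_valuation v (int_closure R)"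
    and fin: "\<exists>F. finite F \<and> F \<subseteq> int_closure R \<and> int_closure R = rspan R F"
    and resrat: "\<forall>z\<in>int_closure R. \<exists>a\<in>R. z - a = 0 \<or> 0 < v (z - a)"
    and c_def: "c \<in> value_set v R \<and> {c..} \<subseteq> value_set v R \<and>
                (\<forall>c'. c' \<in> value_set v R \<and> {c'..} \<subseteq> value_set v R \<longrightarrow> c \<le> c')"
    and \<delta>_def: "\<delta> = int (rlength R R (int_closure R))"
    and r_def: "r = int (rlength R R (colon R (max_ideal R)))"
    and b_def: "b = (c - \<delta>) * r - \<delta>"
    and e_def: "e \<in> value_set v R \<and> 0 < e \<and> (\<forall>s\<in>value_set v R. 0 < s \<longrightarrow> e \<le> s)"
    and x_def: "x \<in> max_ideal R \<and> x \<noteq> 0 \<and> v x = e"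
    and k_def: "k = int (rlength R {a + x * s | a s. a \<in> colon R (int_closure R) \<and> s \<in> R} R)"
    and p_def: "c - e \<le> p * e \<and> p * e < c"
    and h_def: "h = (p + 1) * e - c"
    and k2: "k = 2"
    and y_def: "y \<in> value_set v R \<and> 0 < y \<and> y < c \<and> y - e \<notin> value_set v R"
    and l_def: "0 \<le> l \<and> y + l * e < c \<and> c \<le> y + (l + 1) * e"
  shows "(r = e - 1 \<longrightarrow>
            b = (l + 1) * e + h \<and> b \<le> (l + 2) * e - 2 \<and> (b = (l + 2) * e - 2 \<longleftrightarrow> h = e - 2))
       \<and> (r = e - 2 \<longrightarrow>
            b = (l + 1) * (e - 1) + h - p - 1 \<and> c = (p + l + 2) * (e - 1) - b
          \<and> (l + 1 \<le> p \<and> p \<le> 2 * l + 2 \<and> (p = 2 * l + 2 \<longrightarrow> 0 < h))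
          \<and> ((l + 1) * (e - 3) \<le> b \<and> b \<le> (l + 1) * (e - 2) + e - 3)
          \<and> (b = (l + 1) * (e - 3) \<longleftrightarrow> (p = 2 * l + 2 \<and> h = 1) \<or> (p = 2 * l + 1 \<and> h = 0))
          \<and> (b = (l + 1) * (e - 2) + e - 3 \<longrightarrow> p = l + 1 \<and> 1 < p \<and> h = e - 2 \<and> y = e + 1))"
proof -
  have vmult: "\<And>a b. a \<noteq> 0 \<Longrightarrow> b \<noteq> 0 \<Longrightarrow> v (a * b) = v a + v b"
    and vadd: "\<And>a b. a \<noteq> 0 \<Longrightarrow> b \<noteq> 0 \<Longrightarrow> a + b \<noteq> 0 \<Longrightarrow> min (v a) (v b) \<le> v (a + b)"
    and IC: "int_closure R = {z. z = 0 \<or> 0 \<le> v z}"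
    using dvr unfolding normalized_dvr_valuation_def by blast+
  obtain t where t: "t \<noteq> 0" "v t = 1" using dvr unfolding normalized_dvr_valuation_def by blast
  have RIC: "a \<in> int_closure R" if "a \<in> R" for a
  proof -
    have "- a \<in> R" using subring that unfolding is_subring_def by blast
    moreover have "1 \<in> R" "0 \<in> R" using subring unfolding is_subring_def by auto
    ultimately have "\<forall>i. coeff [:- a, 1:] i \<in> R" by (simp add: coeff_pCons split: nat.split)
    moreover have "lead_coeff [:- a, 1:] = 1" by simp
    moreover have "poly [:- a, 1:] a = 0" by simp
    ultimately show ?thesis unfolding int_closure_def by blast
  qed
  have Rv: "\<And>a. a \<in> R \<Longrightarrow> a \<noteq> 0 \<Longrightarrow> 0 \<le> v a" using RIC IC by auto
  have rr: "\<And>z. z \<noteq> 0 \<Longrightarrow> 0 \<le> v z \<Longrightarrow> \<exists>a\<in>R. z - a = 0 \<or> 0 < v (z - a)"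
    using resrat IC by auto
  have vrR: "vr R v" using subring vmult vadd Rv rr by unfold_locales auto
  interpret vr R v by (rule vrR)
  have vsE: "value_set v R = vals R" by (simp add: value_set_def vals_def)
  obtain F where F: "finite F" "F \<subseteq> int_closure R" "int_closure R = rspan R F" using fin by blast
  have "\<forall>z. \<exists>a. \<exists>b. a \<in> R \<and> b \<in> R \<and> b \<noteq> 0 \<and> z = a / b"
    using qf unfolding quotient_field_is_univ_def by blast
  then have "\<exists>num. \<forall>z. \<exists>b. num z \<in> R \<and> b \<in> R \<and> b \<noteq> 0 \<and> z = num z / b" by (rule choice)
  then obtain num where "\<forall>z. \<exists>b. num z \<in> R \<and> b \<in> R \<and> b \<noteq> 0 \<and> z = num z / b" by blast
  then have "\<exists>den. \<forall>z. num z \<in> R \<and> den z \<in> R \<and> den z \<noteq> 0 \<and> z = num z / den z" by (rule choice)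
  then obtain den where nd': "\<forall>z. num z \<in> R \<and> den z \<in> R \<and> den z \<noteq> 0 \<and> z = num z / den z" by blast
  have nd: "num z \<in> R \<and> den z \<in> R \<and> den z \<noteq> 0 \<and> z = num z / den z" for z using nd' by blast
  define d where "d = (\<Prod>f\<in>F. den f)"
  have dR: "d \<in> R" unfolding d_def by (rule Rprod[OF F(1)]) (simp add: nd)
  have d0: "d \<noteq> 0" using F(1) nd by (simp add: d_def)
  have df: "d * f \<in> R" if "f \<in> F" for f
  proof -
    have e1: "d = den f * (\<Prod>g\<in>F - {f}. den g)" unfolding d_def by (rule prod.remove[OF F(1) that])
    have fe: "f = num f / den f" and dn: "den f \<noteq> 0" using nd[of f] by auto
    have "den f * f = den f * (num f / den f)" using fe by (rule arg_cong)
    then have e2: "den f * f = num f" using dn by simp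
    have "d * f = num f * (\<Prod>g\<in>F - {f}. den g)" unfolding e1 using e2 by (metis mult.assoc mult.commute)
    moreover have "(\<Prod>g\<in>F - {f}. den g) \<in> R" by (rule Rprod) (simp_all add: nd F(1))
    moreover have "num f \<in> R" using nd by blast
    ultimately show ?thesis using Rmult by simp
  qed
  have dz: "d * z \<in> R" if "z \<noteq> 0" "0 \<le> v z" for z
  proof -
    have "z \<in> rspan R F" using F(3) IC that by auto
    then obtain g where g: "z = (\<Sum>f\<in>F. g f * f)" "\<forall>f\<in>F. g f \<in> R" unfolding rspan_def by blast
    have "d * z = (\<Sum>f\<in>F. g f * (d * f))" unfolding g(1) sum_distrib_left by (simp add: algebra_simps)
    moreover have "(\<Sum>f\<in>F. g f * (d * f)) \<in> R" using Rsum[OF F(1)] g(2) df Rmult by simp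
    ultimately show ?thesis by simp
  qed
  have c0: "0 \<le> c" using c_def Rv unfolding vsE vals_def by auto
  have Cin: "\<And>w. w \<noteq> 0 \<Longrightarrow> c \<le> v w \<Longrightarrow> w \<in> R"
    using conductor[OF dR d0 dz _ c0] c_def unfolding vsE by blast
  have k2': "rlength R {a + x * s | a s. a \<in> colon R {z. z = 0 \<or> 0 \<le> v z} \<and> s \<in> R} R = 2"
    using k_def k2 IC by simp
  have mid: "rideal R (max_ideal R)" using loc by (simp add: local_ring_def)
  have vrcR: "vrc R v c" by (rule vrc.intro[OF vrR]) (unfold_locales, rule Cin)
  have bigR: "big R v c e x y p l t"
    apply (rule big.intro[OF vrcR])
    apply unfold_locales
    using c_def e_def x_def mid nonreg t p_def y_def l_def k2' unfolding vsE by simp_all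
  note pd = p_def and ld = l_def
  interpret big R v c e x y p l t by (rule bigR)
  have dl: "\<delta> = c - p - l - 2" using \<delta>_def delta IC by simp
  have p3: "p * e \<noteq> c - 1" using cgap Smul'[OF p_nonneg] by auto
  have r2: "r = e - 2 \<longrightarrow> 2 * y - e < c"
  proof
    assume "r = e - 2"
    then show "2 * y - e < c" using rbound r_def by force
  qed
  show ?thesis
    using arith_final[OF epos dl b_def h_def pd[THEN conjunct1] pd[THEN conjunct2] p3 y_gt_e
        ld[THEN conjunct1] ld[THEN conjunct2, THEN conjunct1] ld[THEN conjunct2, THEN conjunct2] r2] .
qed

end
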